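(* Let $x\in\mathbb{R}^d$ and suppose $\beta\ge\gamma$. Then for every $C\ge 3$, $$\mathbb{P}\Big(\sum_{n\ge2}\gamma_n\mathbf{1}_{X_n\in kNN_n(x)}\le C\Big)=0 .$$
   Context: $X_1,X_2,\dots$ are i.i.d. random vectors in $\mathbb{R}^d$ (copies of the input $X$). Parameters: $0<\beta<1$, $0<\gamma\le1$, $k_n=\lfloor n^\beta\rfloor$, $\gamma_n=n^{-\gamma}$. For $n\ge1$, $\|X-x\|_{(k,n)}$ is the $k$-th smallest value among $\|X_1-x\|,\dots,\|X_n-x\|$ (Euclidean norm), and for $n\ge2$, $\{X_n\in kNN_n(x)\}:=\{\|X_n-x\|\le\|X-x\|_{(k_n,n-1)}\}$. *)

theory Defs
  imports "HOL-Probability.Probability"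
begin

text \<open>The k-th smallest value among norm (X 1 w - x), ..., norm (X n w - x)
  (sample indices start at 1; k is 1-based).\<close>
definition kth_dist :: "(nat \<Rightarrow> 'a \<Rightarrow> 'v::real_normed_vector) \<Rightarrow> 'v \<Rightarrow> nat \<Rightarrow> nat \<Rightarrow> 'a \<Rightarrow> real" where
  "kth_dist X x k n w = sort (map (\<lambda>i. norm (X i w - x)) [1..<n+1]) ! (k - 1)"

definition k_seq :: "real \<Rightarrow> nat \<Rightarrow> nat" where
  "k_seq \<beta> n = nat \<lfloor>real n powr \<beta>\<rfloor>"

definition in_kNN :: "(nat \<Rightarrow> 'a \<Rightarrow> 'v::real_normed_vector) \<Rightarrow> 'v \<Rightarrow> real \<Rightarrow> nat \<Rightarrow> 'a \<Rightarrow> bool" where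
  "in_kNN X x \<beta> n w \<longleftrightarrow> norm (X n w - x) \<le> kth_dist X x (k_seq \<beta> n) (n - 1) w"

end

theory Submission
  imports Defs "HOL-Analysis.Harmonic_Numbers"
begin


lemma sort_nth_le_iff:
  fixes ys :: "real list"
  assumes "1 \<le> k" "k \<le> length ys"
  shows "a \<le> sort ys ! (k-1) \<longleftrightarrow> length (filter (\<lambda>y. y < a) ys) < k"
proof -
  define s where "s = sort ys"
  have srt: "sorted s" and ls: "length s = length ys" by (auto simp: s_def)
  have lf: "length (filter (\<lambda>y. y < a) ys) = length (filter (\<lambda>y. y < a) s)"
    unfolding s_def by (metis mset_filter mset_sort size_mset)
  have lc: "length (filter (\<lambda>y. y < a) s) = card {j. j < length s \<and> s ! j < a}"
    by (rule length_filter_conv_card)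
  show ?thesis unfolding lf lc s_def[symmetric]
  proof
    assume h: "a \<le> s ! (k-1)"
    have "{j. j < length s \<and> s ! j < a} \<subseteq> {..<k-1}"
    proof
      fix j assume "j \<in> {j. j < length s \<and> s ! j < a}"
      hence j: "j < length s" "s ! j < a" by auto
      show "j \<in> {..<k-1}"
      proof (rule ccontr)
        assume "j \<notin> {..<k-1}"
        hence "k - 1 \<le> j" by auto
        hence "s ! (k-1) \<le> s ! j" using srt j by (intro sorted_nth_mono) auto
        thus False using h j by auto
      qed
    qed
    hence "card {j. j < length s \<and> s ! j < a} \<le> card {..<k-1}" by (intro card_mono) auto
    thus "card {j. j < length s \<and> s ! j < a} < k" using assms by auto
  next
    assume h: "card {j. j < length s \<and> s ! j < a} < k"
    show "a \<le> s ! (k-1)"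
    proof (rule ccontr)
      assume "\<not> a \<le> s ! (k-1)"
      hence lt: "s ! (k-1) < a" by auto
      have "{..<k} \<subseteq> {j. j < length s \<and> s ! j < a}"
      proof
        fix j assume "j \<in> {..<k}"
        hence j: "j \<le> k - 1" "j < length s" using assms ls by auto
        hence "s ! j \<le> s ! (k-1)" using srt assms ls by (intro sorted_nth_mono) auto
        thus "j \<in> {j. j < length s \<and> s ! j < a}" using lt j by auto
      qed
      hence "card {..<k} \<le> card {j. j < length s \<and> s ! j < a}" by (intro card_mono) auto
      thus False using h by auto
    qed
  qed
qed

lemma length_filter_map_upt:
  "length (filter P (map f [a..<b])) = card {i\<in>{a..<b}. P (f i)}"
proof -
  have "length (filter P (map f [a..<b])) = length (filter (P \<circ> f) [a..<b])"
    by (simp add: filter_map)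
  also have "\<dots> = card (set (filter (P \<circ> f) [a..<b]))"
    by (rule distinct_card[symmetric]) simp
  also have "set (filter (P \<circ> f) [a..<b]) = {i\<in>{a..<b}. P (f i)}" by auto
  finally show ?thesis .
qed

lemma in_kNN_iff:
  fixes X :: "nat \<Rightarrow> 'a \<Rightarrow> 'v::real_normed_vector"
  assumes "2 \<le> n" "0 < \<beta>" "\<beta> < 1"
  shows "in_kNN X x \<beta> n w \<longleftrightarrow>
     card {i\<in>{1..<n}. norm (X i w - x) < norm (X n w - x)} < k_seq \<beta> n"
proof -
  have k1: "1 \<le> k_seq \<beta> n"
  proof -
    have "1 \<le> real n powr \<beta>" using assms by (intro ge_one_powr_ge_zero) auto
    thus ?thesis unfolding k_seq_def by (simp add: le_nat_iff one_le_floor)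
  qed
  have k2: "k_seq \<beta> n \<le> n - 1"
  proof -
    have "real n powr \<beta> < real n powr 1" using assms by (intro powr_less_mono) auto
    hence "real n powr \<beta> < real n" using assms by simp
    hence "\<lfloor>real n powr \<beta>\<rfloor> < int n" by (simp add: floor_less_iff)
    thus ?thesis unfolding k_seq_def by linarith
  qed
  have e: "n - 1 + 1 = n" using assms by simp
  show ?thesis
    unfolding in_kNN_def kth_dist_def e
  proof (subst sort_nth_le_iff)
    show "1 \<le> k_seq \<beta> n" by (rule k1)
    show "k_seq \<beta> n \<le> length (map (\<lambda>i. norm (X i w - x)) [1..<n])" using k2 by simp
    show "(length (filter (\<lambda>y. y < norm (X n w - x)) (map (\<lambda>i. norm (X i w - x)) [1..<n])) < k_seq \<beta> n)
      = (card {i\<in>{1..<n}. norm (X i w - x) < norm (X n w - x)} < k_seq \<beta> n)"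
      by (subst length_filter_map_upt) (rule refl)
  qed
qed



lemma (in prob_space) prob_le_expect:
  assumes "Q \<in> events" "integrable M g" "\<And>w. w \<in> space M \<Longrightarrow> indicator Q w \<le> g w"
  shows "prob Q \<le> expectation g"
proof -
  have "prob Q = expectation (indicator Q :: 'a \<Rightarrow> real)"
    using assms(1) by simp
  also have "\<dots> \<le> expectation g"
  proof (intro integral_mono)
    show "integrable M (indicator Q :: 'a \<Rightarrow> real)"
      by (rule integrable_const_bound[where B=1]) (use assms(1) in auto)
  qed (use assms in auto)
  finally show ?thesis .
qed

locale knn = prob_space M for M :: "'a measure" +
  fixes D :: "nat \<Rightarrow> 'a \<Rightarrow> real"
  assumes D_meas[measurable]: "\<And>i. D i \<in> borel_measurable M"
  and D_indep: "indep_vars (\<lambda>_. borel) D {1..}"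
  and D_distr: "\<And>i. 1 \<le> i \<Longrightarrow> distr M borel (D i) = distr M borel (D 1)"
begin

lemma expect_D:
  fixes f :: "real \<Rightarrow> real"
  assumes "1 \<le> i" "f \<in> borel_measurable borel"
  shows "expectation (\<lambda>w. f (D i w)) = expectation (\<lambda>w. f (D 1 w))"
proof -
  have "expectation (\<lambda>w. f (D i w)) = integral\<^sup>L (distr M borel (D i)) f"
    by (rule integral_distr[symmetric, OF D_meas assms(2)])
  also have "\<dots> = integral\<^sup>L (distr M borel (D 1)) f" using D_distr[OF assms(1)] by simp
  also have "\<dots> = expectation (\<lambda>w. f (D 1 w))"
    by (rule integral_distr[OF D_meas assms(2)])
  finally show ?thesis .
qed

lemma prod_expect:
  fixes \<phi> :: "nat \<Rightarrow> real \<Rightarrow> real"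
  assumes I: "finite I" "I \<subseteq> {1..}"
    and meas: "\<And>i. i \<in> I \<Longrightarrow> \<phi> i \<in> borel_measurable borel"
    and bnd: "\<And>i d. i \<in> I \<Longrightarrow> \<bar>\<phi> i d\<bar> \<le> B"
  shows "expectation (\<lambda>w. \<Prod>i\<in>I. \<phi> i (D i w)) = (\<Prod>i\<in>I. expectation (\<lambda>w. \<phi> i (D 1 w)))"
proof -
  have ind: "indep_vars (\<lambda>_. borel) (\<lambda>i w. \<phi> i (D i w)) I"
    by (rule indep_vars_compose2[OF indep_vars_subset[OF D_indep I(2)]]) (use meas in auto)
  have int: "integrable M (\<lambda>w. \<phi> i (D i w))" if "i \<in> I" for i
    by (rule integrable_const_bound[where B=B]) (use bnd meas that in auto)
  have "expectation (\<lambda>w. \<Prod>i\<in>I. \<phi> i (D i w)) = (\<Prod>i\<in>I. expectation (\<lambda>w. \<phi> i (D i w)))"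
    by (rule indep_vars_lebesgue_integral[OF I(1) ind int])
  also have "\<dots> = (\<Prod>i\<in>I. expectation (\<lambda>w. \<phi> i (D 1 w)))"
    using I meas by (intro prod.cong refl expect_D) auto
  finally show ?thesis .
qed

lemma expect_ind:
  "expectation (\<lambda>w. 1 + a * indicator {..t} (D 1 w)) = 1 + a * prob {w\<in>space M. D 1 w \<le> t}"
proof -
  have i1: "integrable M (\<lambda>w. indicator {..t} (D 1 w) :: real)"
    by (rule integrable_const_bound[where B=1]) (auto simp: indicator_def)
  have i2: "expectation (\<lambda>w. indicator {..t} (D 1 w) :: real) = prob {w\<in>space M. D 1 w \<le> t}"
  proof -
    have "expectation (\<lambda>w. indicator {..t} (D 1 w) :: real) = expectation (indicator {w\<in>space M. D 1 w \<le> t})"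
      by (intro Bochner_Integration.integral_cong) (auto simp: indicator_def)
    also have "\<dots> = prob {w\<in>space M. D 1 w \<le> t}" by simp
    finally show ?thesis .
  qed
  have "expectation (\<lambda>w. 1 + a * indicator {..t} (D 1 w)) = expectation (\<lambda>w. 1) + expectation (\<lambda>w. a * indicator {..t} (D 1 w))"
    by (rule Bochner_Integration.integral_add) (use i1 in auto)
  also have "\<dots> = 1 + a * prob {w\<in>space M. D 1 w \<le> t}" using i2 by (simp add: prob_space)
  finally show ?thesis .
qed

lemma expect_ind_less:
  "expectation (\<lambda>w. 1 + a * indicator {..<t} (D 1 w)) = 1 + a * prob {w\<in>space M. D 1 w < t}"
proof -
  have i1: "integrable M (\<lambda>w. indicator {..<t} (D 1 w) :: real)"
    by (rule integrable_const_bound[where B=1]) (auto simp: indicator_def)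
  have i2: "expectation (\<lambda>w. indicator {..<t} (D 1 w) :: real) = prob {w\<in>space M. D 1 w < t}"
  proof -
    have "expectation (\<lambda>w. indicator {..<t} (D 1 w) :: real) = expectation (indicator {w\<in>space M. D 1 w < t})"
      by (intro Bochner_Integration.integral_cong) (auto simp: indicator_def)
    also have "\<dots> = prob {w\<in>space M. D 1 w < t}" by simp
    finally show ?thesis .
  qed
  have "expectation (\<lambda>w. 1 + a * indicator {..<t} (D 1 w)) = expectation (\<lambda>w. 1) + expectation (\<lambda>w. a * indicator {..<t} (D 1 w))"
    by (rule Bochner_Integration.integral_add) (use i1 in auto)
  also have "\<dots> = 1 + a * prob {w\<in>space M. D 1 w < t}" using i2 by (simp add: prob_space)
  finally show ?thesis .
qed

end


lemma exp_neg_bound: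
  fixes g :: real assumes "0 \<le> g" "g \<le> 1"
  shows "exp (-g) \<le> 1 - g / exp 1"
proof -
  have "1 + g \<le> exp g" by (rule exp_ge_add_one_self)
  hence "exp (-g) * (1 + g) \<le> exp (-g) * exp g" by (intro mult_left_mono) auto
  also have "exp (-g) * exp g = 1" by (simp add: exp_add[symmetric])
  finally have a: "exp (-g) * (1 + g) \<le> 1" .
  have "exp (-1) \<le> exp (-g)" using assms by simp
  hence b: "g * exp (-1) \<le> g * exp (-g)" using assms by (intro mult_left_mono) auto
  have c: "exp (-g) \<le> 1 - g * exp (-g)" using a by (simp add: algebra_simps)
  have d: "g * exp (-1) = g / exp 1" by (simp add: exp_minus field_simps)
  show ?thesis using b c d by linarith
qed

context knn begin

lemma weighted_BC:
  fixes g p t :: "nat \<Rightarrow> real"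
  assumes g: "\<And>n. 0 \<le> g n" "\<And>n. g n \<le> 1"
    and p: "\<And>n. n0 \<le> n \<Longrightarrow> p n \<le> prob {w\<in>space M. D 1 w \<le> t n}"
    and n0: "1 \<le> n0"
    and dv: "\<And>K. \<exists>N. K \<le> (\<Sum>n\<in>{n0..N}. g n * p n)"
  shows "prob {w\<in>space M. \<forall>N. (\<Sum>n\<in>{n0..N}. g n * indicator {..t n} (D n w)) \<le> C} = 0"
proof -
  define Q where "Q = {w\<in>space M. \<forall>N. (\<Sum>n\<in>{n0..N}. g n * indicator {..t n} (D n w)) \<le> C}"
  have Qm: "Q \<in> events" unfolding Q_def by measurable
  define \<phi> where "\<phi> n d = 1 + (exp (- g n) - 1) * indicator {..t n} d" for n d
  have \<phi>_eq: "\<phi> n d = exp (- (g n * indicator {..t n} d))" for n d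
    by (simp add: \<phi>_def indicator_def)
  have \<phi>_bnd: "0 \<le> \<phi> n d" "\<phi> n d \<le> 1" for n d
    using g[of n] by (auto simp: \<phi>_eq indicator_def)
  have \<phi>_meas: "\<phi> n \<in> borel_measurable borel" for n
    unfolding \<phi>_def by measurable
  have bound: "prob Q \<le> exp (C - (\<Sum>n\<in>{n0..N}. g n * p n) / exp 1)" for N
  proof -
    define f where "f w = exp C * (\<Prod>n\<in>{n0..N}. \<phi> n (D n w))" for w
    have fint: "integrable M f"
    proof (rule integrable_const_bound[where B="exp C"])
      have pb: "0 \<le> (\<Prod>n\<in>{n0..N}. \<phi> n (D n w)) \<and> (\<Prod>n\<in>{n0..N}. \<phi> n (D n w)) \<le> 1" for w
        by (intro conjI prod_nonneg prod_le_1) (use \<phi>_bnd in auto)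
      show "AE w in M. norm (f w) \<le> exp C"
        using pb by (auto simp: f_def abs_mult)
      show "f \<in> borel_measurable M" unfolding f_def using \<phi>_meas by measurable
    qed
    have "prob Q \<le> expectation f"
    proof (rule prob_le_expect[OF Qm fint])
      fix w assume w: "w \<in> space M"
      have f0: "0 \<le> f w" using \<phi>_bnd by (auto simp: f_def intro!: mult_nonneg_nonneg prod_nonneg)
      show "indicator Q w \<le> f w"
      proof (cases "w \<in> Q")
        case True
        hence s: "(\<Sum>n\<in>{n0..N}. g n * indicator {..t n} (D n w)) \<le> C" unfolding Q_def by auto
        have "f w = exp C * exp (- (\<Sum>n\<in>{n0..N}. g n * indicator {..t n} (D n w)))"
          by (simp add: f_def \<phi>_eq exp_sum[symmetric] sum_negf)
        also have "\<dots> = exp (C - (\<Sum>n\<in>{n0..N}. g n * indicator {..t n} (D n w)))"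
          by (simp add: exp_diff exp_minus field_simps)
        also have "\<dots> \<ge> 1" using s by simp
        finally show ?thesis using True by simp
      qed (use f0 in auto)
    qed
    also have "expectation f = exp C * expectation (\<lambda>w. \<Prod>n\<in>{n0..N}. \<phi> n (D n w))"
      unfolding f_def by simp
    also have "expectation (\<lambda>w. \<Prod>n\<in>{n0..N}. \<phi> n (D n w)) = (\<Prod>n\<in>{n0..N}. expectation (\<lambda>w. \<phi> n (D 1 w)))"
      by (rule prod_expect[where B=1]) (use n0 \<phi>_meas \<phi>_bnd in auto)
    also have "\<dots> \<le> (\<Prod>n\<in>{n0..N}. exp (- (g n * p n / exp 1)))"
    proof (rule prod_mono)
      fix n assume n: "n \<in> {n0..N}"
      have e: "expectation (\<lambda>w. \<phi> n (D 1 w)) = 1 + (exp (- g n) - 1) * prob {w\<in>space M. D 1 w \<le> t n}"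
        unfolding \<phi>_def by (rule expect_ind)
      have "0 \<le> expectation (\<lambda>w. \<phi> n (D 1 w))"
        using \<phi>_bnd by (intro Bochner_Integration.integral_nonneg) auto
      moreover have "expectation (\<lambda>w. \<phi> n (D 1 w)) \<le> 1 - g n / exp 1 * prob {w\<in>space M. D 1 w \<le> t n}"
      proof -
        have "exp (- g n) - 1 \<le> - (g n / exp 1)" using exp_neg_bound[OF g(1)[of n] g(2)[of n]] by simp
        hence "(exp (- g n) - 1) * prob {w\<in>space M. D 1 w \<le> t n} \<le> - (g n / exp 1) * prob {w\<in>space M. D 1 w \<le> t n}"
          by (intro mult_right_mono) auto
        thus ?thesis unfolding e by simp
      qed
      moreover have "1 - g n / exp 1 * prob {w\<in>space M. D 1 w \<le> t n} \<le> 1 - g n / exp 1 * p n"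
        using p[of n] n g[of n] by (intro diff_left_mono mult_left_mono) auto
      moreover have "1 - g n / exp 1 * p n \<le> exp (- (g n * p n / exp 1))"
        using exp_ge_add_one_self[of "- (g n * p n / exp 1)"] by simp
      ultimately show "0 \<le> expectation (\<lambda>w. \<phi> n (D 1 w)) \<and> expectation (\<lambda>w. \<phi> n (D 1 w)) \<le> exp (- (g n * p n / exp 1))"
        by linarith
    qed
    also have "(\<Prod>n\<in>{n0..N}. exp (- (g n * p n / exp 1))) = exp (- ((\<Sum>n\<in>{n0..N}. g n * p n) / exp 1))"
      by (simp add: exp_sum[symmetric] sum_negf sum_divide_distrib)
    finally have "prob Q \<le> exp C * exp (- ((\<Sum>n\<in>{n0..N}. g n * p n) / exp 1))"
      by (simp add: mult_left_mono)
    also have "exp C * exp (- ((\<Sum>n\<in>{n0..N}. g n * p n) / exp 1)) = exp (C - (\<Sum>n\<in>{n0..N}. g n * p n) / exp 1)"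
      by (simp add: exp_add[symmetric])
    finally show ?thesis .
  qed
  have "prob Q \<le> 0"
  proof (rule ccontr)
    assume "\<not> prob Q \<le> 0"
    hence pos: "0 < prob Q" by simp
    obtain N where N: "exp 1 * (C - ln (prob Q / 2)) \<le> (\<Sum>n\<in>{n0..N}. g n * p n)" using dv by blast
    hence "C - (\<Sum>n\<in>{n0..N}. g n * p n) / exp 1 \<le> ln (prob Q / 2)"
      by (simp add: field_simps)
    hence "exp (C - (\<Sum>n\<in>{n0..N}. g n * p n) / exp 1) \<le> prob Q / 2"
      using pos by (metis exp_le_cancel_iff exp_ln half_gt_zero)
    thus False using bound[of N] pos by linarith
  qed
  thus ?thesis unfolding Q_def[symmetric] using measure_nonneg[of M Q] by linarith
qed

lemma count_tail:
  "prob {w\<in>space M. real k \<le> real (card {i\<in>{1..<n}. D i w < t})}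
     \<le> exp (2 * real (n - 1) * prob {w\<in>space M. D 1 w < t} - real k)"
proof -
  define q where "q = prob {w\<in>space M. D 1 w < t}"
  define Q where "Q = {w\<in>space M. real k \<le> real (card {i\<in>{1..<n}. D i w < t})}"
  define \<phi> :: "real \<Rightarrow> real" where "\<phi> d = 1 + (exp 1 - 1) * indicator {..<t} d" for d
  have \<phi>_eq: "\<phi> d = exp (indicator {..<t} d)" for d
    by (simp add: \<phi>_def indicator_def)
  have \<phi>_bnd: "0 \<le> \<phi> d" "\<phi> d \<le> 3" for d
    using exp_le by (auto simp: \<phi>_def indicator_def)
  have \<phi>_meas: "\<phi> \<in> borel_measurable borel" unfolding \<phi>_def by measurable
  have card_eq: "real (card {i\<in>{1..<n}. D i w < t}) = (\<Sum>i\<in>{1..<n}. indicator {..<t} (D i w))" for w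
  proof -
    have "real (card {i\<in>{1..<n}. D i w < t}) = (\<Sum>i\<in>{i\<in>{1..<n}. D i w < t}. 1)" by simp
    also have "\<dots> = (\<Sum>i\<in>{1..<n}. if D i w < t then 1 else 0)" by (rule sum.inter_filter) simp
    also have "\<dots> = (\<Sum>i\<in>{1..<n}. indicator {..<t} (D i w))" by (intro sum.cong) (auto simp: indicator_def)
    finally show ?thesis .
  qed
  define f where "f w = exp (- real k) * (\<Prod>i\<in>{1..<n}. \<phi> (D i w))" for w
  have Qm: "Q \<in> events" unfolding Q_def card_eq by measurable
  have fint: "integrable M f"
  proof (rule integrable_const_bound[where B="exp (- real k) * 3 ^ (n - 1)"])
    have "(\<Prod>i\<in>{1..<n}. \<phi> (D i w)) \<le> (\<Prod>i\<in>{1..<n}. 3)" for w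
      using \<phi>_bnd by (intro prod_mono) auto
    thus "AE w in M. norm (f w) \<le> exp (- real k) * 3 ^ (n - 1)"
      using \<phi>_bnd by (auto simp: f_def abs_mult prod_nonneg intro!: mult_left_mono)
    show "f \<in> borel_measurable M" unfolding f_def using \<phi>_meas by measurable
  qed
  have "prob Q \<le> expectation f"
  proof (rule prob_le_expect[OF Qm fint])
    fix w assume w: "w \<in> space M"
    have f0: "0 \<le> f w" using \<phi>_bnd by (auto simp: f_def intro!: mult_nonneg_nonneg prod_nonneg)
    show "indicator Q w \<le> f w"
    proof (cases "w \<in> Q")
      case True
      hence s: "real k \<le> (\<Sum>i\<in>{1..<n}. indicator {..<t} (D i w))" unfolding Q_def card_eq by auto
      have "f w = exp (- real k) * exp (\<Sum>i\<in>{1..<n}. indicator {..<t} (D i w))"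
        by (simp add: f_def \<phi>_eq exp_sum)
      also have "\<dots> = exp ((\<Sum>i\<in>{1..<n}. indicator {..<t} (D i w)) - real k)"
        by (simp add: exp_diff exp_minus field_simps)
      also have "\<dots> \<ge> 1" using s by simp
      finally show ?thesis using True by simp
    qed (use f0 in auto)
  qed
  also have "expectation f = exp (- real k) * expectation (\<lambda>w. \<Prod>i\<in>{1..<n}. \<phi> (D i w))"
    unfolding f_def by simp
  also have "expectation (\<lambda>w. \<Prod>i\<in>{1..<n}. \<phi> (D i w)) = (\<Prod>i\<in>{1..<n}. expectation (\<lambda>w. \<phi> (D 1 w)))"
    by (rule prod_expect[where B=3 and \<phi>="\<lambda>_. \<phi>"]) (use \<phi>_meas \<phi>_bnd in auto)
  also have "\<dots> = (1 + (exp 1 - 1) * q) ^ (n - 1)"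
    unfolding \<phi>_def expect_ind_less q_def by simp
  also have "\<dots> \<le> exp (2 * q) ^ (n - 1)"
  proof (rule power_mono)
    have q0: "0 \<le> q" unfolding q_def by simp
    have "(exp 1 - 1) * q \<le> 2 * q" using exp_le q0 by (intro mult_right_mono) auto
    thus "1 + (exp 1 - 1) * q \<le> exp (2 * q)" using exp_ge_add_one_self[of "2*q"] by linarith
    show "0 \<le> 1 + (exp 1 - 1) * q" using q0 by (simp add: add_nonneg_nonneg)
  qed
  also have "exp (2 * q) ^ (n - 1) = exp (2 * real (n - 1) * q)"
    by (simp add: exp_of_nat_mult[symmetric] mult_ac)
  finally have "prob Q \<le> exp (- real k) * exp (2 * real (n - 1) * q)" by simp
  thus ?thesis unfolding Q_def q_def by (simp add: exp_diff exp_minus field_simps)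
qed

end


lemma exp_ge_pow:
  fixes y :: real assumes "0 \<le> y" "1 \<le> j"
  shows "(y / real j) ^ j \<le> exp y"
proof -
  have "y / real j \<le> exp (y / real j)" using exp_ge_add_one_self[of "y / real j"] by linarith
  hence "(y / real j) ^ j \<le> exp (y / real j) ^ j" using assms by (intro power_mono) auto
  also have "\<dots> = exp (real j * (y / real j))" by (rule exp_of_nat_mult[symmetric])
  also have "\<dots> = exp y" using assms by simp
  finally show ?thesis .
qed

lemma summable_exp_k:
  fixes \<beta> :: real assumes "0 < \<beta>"
  shows "summable (\<lambda>n. exp (- real (k_seq \<beta> n) / 2))"
proof -
  define j where "j = nat \<lceil>2 / \<beta>\<rceil>"
  have "0 < real_of_int \<lceil>2 / \<beta>\<rceil>" using le_of_int_ceiling[of "2/\<beta>"] assms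
    by (smt (verit) divide_pos_pos)
  hence "0 < \<lceil>2 / \<beta>\<rceil>" by simp
  hence j1: "1 \<le> j" unfolding j_def by linarith
  have jb: "2 \<le> real j * \<beta>"
  proof -
    have "2 / \<beta> \<le> real j" unfolding j_def by linarith
    thus ?thesis using assms by (simp add: field_simps)
  qed
  define c where "c = exp (1/2) * (2 * real j) ^ j"
  show ?thesis
  proof (rule summable_comparison_test'[where N=1])
    show "summable (\<lambda>n. c * inverse (real n ^ 2))"
      by (intro summable_mult inverse_power_summable) auto
  next
    fix n :: nat assume n: "1 \<le> n"
    have kb: "real n powr \<beta> - 1 \<le> real (k_seq \<beta> n)"
    proof -
      have "0 \<le> real n powr \<beta>" by simp
      thus ?thesis unfolding k_seq_def by linarith
    qed
    have "exp (- real (k_seq \<beta> n) / 2) \<le> exp (1/2 - real n powr \<beta> / 2)"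
      using kb by simp
    also have "\<dots> = exp (1/2) / exp (real n powr \<beta> / 2)" by (simp add: exp_diff)
    also have "\<dots> \<le> exp (1/2) / ((real n powr \<beta> / 2 / real j) ^ j)"
    proof (rule divide_left_mono)
      show "(real n powr \<beta> / 2 / real j) ^ j \<le> exp (real n powr \<beta> / 2)"
        by (rule exp_ge_pow) (use j1 in auto)
      have "0 < real n powr \<beta>" using n by simp
      thus "0 < exp (real n powr \<beta> / 2) * (real n powr \<beta> / 2 / real j) ^ j"
        using j1 by (intro mult_pos_pos zero_less_power divide_pos_pos) auto
    qed simp
    also have "(real n powr \<beta> / 2 / real j) ^ j = (real n powr \<beta>) ^ j / (2 * real j) ^ j"
      by (simp add: power_divide power_mult_distrib)
    also have "(real n powr \<beta>) ^ j = real n powr (real j * \<beta>)"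
      using n by (simp add: powr_realpow[symmetric] powr_powr mult_ac)
    also have "real n powr (real j * \<beta>) \<ge> real n powr 2"
      using n jb by (intro powr_mono) auto
    hence "exp (1/2) / (real n powr (real j * \<beta>) / (2 * real j) ^ j) \<le> exp (1/2) / (real n powr 2 / (2 * real j) ^ j)"
      using n j1 by (intro divide_left_mono divide_right_mono mult_pos_pos) auto
    also have "exp (1/2) / (real n powr 2 / (2 * real j) ^ j) = c * inverse (real n ^ 2)"
      using n by (simp add: c_def powr_realpow field_simps)
    finally show "norm (exp (- real (k_seq \<beta> n) / 2)) \<le> c * inverse (real n ^ 2)" by simp
  qed
qed

context knn begin

lemma quantile:
  assumes p: "0 < p" "p < 1" and nn: "\<And>w. w \<in> space M \<Longrightarrow> 0 \<le> D 1 w"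
  shows "\<exists>t. p \<le> prob {w\<in>space M. D 1 w \<le> t} \<and> prob {w\<in>space M. D 1 w < t} \<le> p"
proof -
  define F where "F s = prob {w\<in>space M. D 1 w \<le> s}" for s
  have Fmono: "F s \<le> F s'" if "s \<le> s'" for s s'
    unfolding F_def using that by (intro finite_measure_mono) auto
  define T where "T = {s. p \<le> F s}"
  have "(\<lambda>m. F (real m)) \<longlonglongrightarrow> measure M (\<Union>m. {w\<in>space M. D 1 w \<le> real m})"
    unfolding F_def by (intro finite_Lim_measure_incseq) (auto simp: incseq_def)
  also have "(\<Union>m. {w\<in>space M. D 1 w \<le> real m}) = space M"
    by (auto intro: real_nat_ceiling_ge)
  finally have "(\<lambda>m. F (real m)) \<longlonglongrightarrow> 1" by (simp add: prob_space)
  from order_tendstoD(1)[OF this p(2)] obtain m where m: "p < F (real m)"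
    by (auto simp: eventually_sequentially)
  have "real m \<in> T" using m unfolding T_def by simp
  hence Tne: "T \<noteq> {}" by auto
  have Tlow: "0 \<le> s" if "s \<in> T" for s
  proof (rule ccontr)
    assume "\<not> 0 \<le> s"
    hence "{w\<in>space M. D 1 w \<le> s} = {}" using nn by force
    hence "F s = 0" unfolding F_def by (simp only: measure_empty)
    thus False using that p unfolding T_def by auto
  qed
  have bdd: "bdd_below T" unfolding bdd_below_def using Tlow by blast
  define t where "t = Inf T"
  have above: "p \<le> F s" if ts: "t < s" for s
  proof -
    obtain s' where "s' \<in> T" "s' < s" using ts Tne bdd unfolding t_def by (meson cInf_lessD)
    thus ?thesis using Fmono[of s' s] unfolding T_def by auto
  qed
  have below: "F s < p" if st: "s < t" for s
  proof (rule ccontr)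
    assume "\<not> F s < p"
    hence "s \<in> T" unfolding T_def by auto
    hence "t \<le> s" unfolding t_def using bdd by (rule cInf_lower)
    thus False using st by auto
  qed
  have "(\<lambda>m. F (t + inverse (real (Suc m)))) \<longlonglongrightarrow> measure M (\<Inter>m. {w\<in>space M. D 1 w \<le> t + inverse (real (Suc m))})"
    unfolding F_def
  proof (intro finite_Lim_measure_decseq)
    show "decseq (\<lambda>m. {w\<in>space M. D 1 w \<le> t + inverse (real (Suc m))})"
    proof (rule decseq_SucI)
      fix m
      have "inverse (real (Suc (Suc m))) \<le> inverse (real (Suc m))" by (intro le_imp_inverse_le) auto
      thus "{w\<in>space M. D 1 w \<le> t + inverse (real (Suc (Suc m)))} \<subseteq> {w\<in>space M. D 1 w \<le> t + inverse (real (Suc m))}"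
        by (smt (verit) Collect_mono_iff)
    qed
  qed auto
  also have "(\<Inter>m. {w\<in>space M. D 1 w \<le> t + inverse (real (Suc m))}) = {w\<in>space M. D 1 w \<le> t}"
  proof (intro equalityI subsetI)
    fix w assume w: "w \<in> (\<Inter>m. {w\<in>space M. D 1 w \<le> t + inverse (real (Suc m))})"
    hence ws: "w \<in> space M" by auto
    show "w \<in> {w\<in>space M. D 1 w \<le> t}"
    proof (rule ccontr)
      assume "w \<notin> {w\<in>space M. D 1 w \<le> t}"
      hence "0 < D 1 w - t" using ws by auto
      then obtain m where m: "inverse (real (Suc m)) < D 1 w - t" using reals_Archimedean by blast
      have "D 1 w \<le> t + inverse (real (Suc m))" using w by blast
      thus False using m by linarith
    qed
  qed (auto intro: order_trans[OF _ le_add_same_cancel1[THEN iffD2]])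
  finally have l1: "(\<lambda>m. F (t + inverse (real (Suc m)))) \<longlonglongrightarrow> F t" unfolding F_def .
  have "p \<le> F t"
    by (rule LIMSEQ_le_const[OF l1]) (auto intro!: above)
  have "(\<lambda>m. F (t - inverse (real (Suc m)))) \<longlonglongrightarrow> measure M (\<Union>m. {w\<in>space M. D 1 w \<le> t - inverse (real (Suc m))})"
    unfolding F_def
  proof (intro finite_Lim_measure_incseq)
    show "incseq (\<lambda>m. {w\<in>space M. D 1 w \<le> t - inverse (real (Suc m))})"
    proof (rule incseq_SucI)
      fix m
      have "inverse (real (Suc (Suc m))) \<le> inverse (real (Suc m))" by (intro le_imp_inverse_le) auto
      thus "{w\<in>space M. D 1 w \<le> t - inverse (real (Suc m))} \<subseteq> {w\<in>space M. D 1 w \<le> t - inverse (real (Suc (Suc m)))}"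
        by (smt (verit) Collect_mono_iff)
    qed
  qed auto
  also have "(\<Union>m. {w\<in>space M. D 1 w \<le> t - inverse (real (Suc m))}) = {w\<in>space M. D 1 w < t}"
  proof (intro equalityI subsetI)
    fix w assume w: "w \<in> {w\<in>space M. D 1 w < t}"
    hence "0 < t - D 1 w" by simp
    then obtain m where m: "inverse (real (Suc m)) < t - D 1 w" using reals_Archimedean by blast
    hence "w \<in> {w\<in>space M. D 1 w \<le> t - inverse (real (Suc m))}" using w by simp
    thus "w \<in> (\<Union>m. {w\<in>space M. D 1 w \<le> t - inverse (real (Suc m))})" by blast
  next
    fix w assume "w \<in> (\<Union>m. {w\<in>space M. D 1 w \<le> t - inverse (real (Suc m))})"
    then obtain m where "w \<in> space M" "D 1 w \<le> t - inverse (real (Suc m))" by auto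
    moreover have "0 < inverse (real (Suc m))" by (simp del: of_nat_Suc)
    ultimately have "D 1 w < t" by linarith
    thus "w \<in> {w\<in>space M. D 1 w < t}" using \<open>w \<in> space M\<close> by blast
  qed
  finally have l2: "(\<lambda>m. F (t - inverse (real (Suc m)))) \<longlonglongrightarrow> prob {w\<in>space M. D 1 w < t}" .
  have "prob {w\<in>space M. D 1 w < t} \<le> p"
    by (rule LIMSEQ_le_const2[OF l2]) (auto intro!: less_imp_le[OF below])
  with \<open>p \<le> F t\<close> show ?thesis unfolding F_def by blast
qed

end


lemma harmonic_tail_unbounded:
  fixes n0 :: nat and K :: real
  shows "\<exists>N. K \<le> (\<Sum>n\<in>{n0..N}. 1 / real n)"
proof -
  define H0 where "H0 = (\<Sum>n\<in>{1..<n0}. 1 / real n)"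
  define N where "N = nat \<lceil>exp (K + H0)\<rceil>"
  have "exp (K + H0) \<le> real N" unfolding N_def by linarith
  hence "K + H0 \<le> ln (real N + 1)"
    by (smt (verit, best) exp_gt_zero ln_exp ln_le_cancel_iff)
  also have "\<dots> \<le> harm N" by (rule ln_le_harm)
  also have "harm N = (\<Sum>n\<in>{1..N}. 1 / real n)" by (simp add: harm_def inverse_eq_divide)
  also have "\<dots> \<le> (\<Sum>n\<in>{1..<n0} \<union> {n0..N}. 1 / real n)"
    by (intro sum_mono2) auto
  also have "\<dots> = H0 + (\<Sum>n\<in>{n0..N}. 1 / real n)"
    unfolding H0_def by (subst sum.union_disjoint) auto
  finally show ?thesis by auto
qed

theorem lemma4:
  fixes M :: "'a measure" and X :: "nat \<Rightarrow> 'a \<Rightarrow> real ^ 'd" and x :: "real ^ 'd"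
    and \<beta> \<gamma> C :: real
  assumes "prob_space M"
    and "\<And>i. i \<ge> 1 \<Longrightarrow> X i \<in> borel_measurable M"
    and "prob_space.indep_vars M (\<lambda>_. borel) X {1..}"
    and "\<And>i. i \<ge> 1 \<Longrightarrow> distr M borel (X i) = distr M borel (X 1)"
    and "0 < \<beta>" and "\<beta> < 1" and "0 < \<gamma>" and "\<gamma> \<le> 1"
    and "\<beta> \<ge> \<gamma>"
    and "C \<ge> 3"
  shows "{w \<in> space M. (\<Sum>n. ennreal (if 2 \<le> n \<and> in_kNN X x \<beta> n w then real n powr (-\<gamma>) else 0))
            \<le> ennreal C} \<in> sets M
      \<and> measure M {w \<in> space M. (\<Sum>n. ennreal (if 2 \<le> n \<and> in_kNN X x \<beta> n w then real n powr (-\<gamma>) else 0))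
            \<le> ennreal C} = 0"
proof -
  interpret P: prob_space M by fact
  define D where "D i w = (if 1 \<le> i then norm (X i w - x) else 0)" for i w
  have Dmeas: "D i \<in> borel_measurable M" for i
  proof (cases "1 \<le> i")
    case True
    have [measurable]: "X i \<in> borel_measurable M" using assms(2) True by simp
    show ?thesis unfolding D_def using True by simp
  next
    case False
    hence "D i = (\<lambda>w. 0)" by (auto simp: D_def fun_eq_iff)
    thus ?thesis by simp
  qed
  have Dind: "P.indep_vars (\<lambda>_. borel) D {1..}"
  proof -
    have "P.indep_vars (\<lambda>_. borel) (\<lambda>i w. norm (X i w - x)) {1..}"
      by (rule P.indep_vars_compose2[OF assms(3)]) auto
    thus ?thesis by (subst P.indep_vars_cong[where Y="\<lambda>i w. norm (X i w - x)" and N'="\<lambda>_. borel"]) (auto simp: D_def fun_eq_iff)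
  qed
  have Ddistr: "distr M borel (D i) = distr M borel (D 1)" if i: "1 \<le> i" for i
  proof -
    have e: "distr M borel (D j) = distr (distr M borel (X j)) borel (\<lambda>v. norm (v - x))" if "1 \<le> j" for j
    proof -
      have [measurable]: "X j \<in> borel_measurable M" using assms(2) that by simp
      have "D j = (\<lambda>w. norm (X j w - x))" using that by (auto simp: D_def)
      thus ?thesis by (simp add: distr_distr comp_def)
    qed
    show ?thesis using e[OF i] e[of 1] assms(4)[OF i] by simp
  qed
  have knn: "knn M D"
  proof (rule knn.intro[OF assms(1)])
    show "knn_axioms M D" by (rule knn_axioms.intro[OF Dmeas Dind Ddistr])
  qed
  interpret K: knn M D by (rule knn)
  have Dnn: "0 \<le> D i w" for i w by (simp add: D_def)
  have kNN_iff: "in_kNN X x \<beta> n w \<longleftrightarrow> card {i\<in>{1..<n}. D i w < D n w} < k_seq \<beta> n" if n: "2 \<le> n" for n w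
  proof -
    have "{i\<in>{1..<n}. norm (X i w - x) < norm (X n w - x)} = {i\<in>{1..<n}. D i w < D n w}"
      using n by (auto simp: D_def)
    thus ?thesis using in_kNN_iff[OF n assms(5,6), of X x w] by simp
  qed
  have card_eq: "real (card {i\<in>{1..<n}. D i w < a}) = (\<Sum>i\<in>{1..<n}. if D i w < a then 1 else 0)" for n w a
    by (simp add: sum.inter_filter[symmetric])
  define f where "f n w = (if 2 \<le> n \<and> in_kNN X x \<beta> n w then real n powr (-\<gamma>) else 0)" for n w
  have f_alt: "f n w = (if 2 \<le> n \<and> (\<Sum>i\<in>{1..<n}. if D i w < D n w then 1 else 0) < real (k_seq \<beta> n) then real n powr (-\<gamma>) else 0)" for n w
    unfolding f_def using kNN_iff card_eq[symmetric] by auto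
  have fmeas[measurable]: "f n \<in> borel_measurable M" for n
    unfolding f_alt[abs_def] using Dmeas by measurable
  have f0: "0 \<le> f n w" for n w by (simp add: f_def)
  define S where "S w = (\<Sum>n. ennreal (f n w))" for w
  have Smeas: "S \<in> borel_measurable M" unfolding S_def by measurable
  have set_eq: "{w \<in> space M. (\<Sum>n. ennreal (if 2 \<le> n \<and> in_kNN X x \<beta> n w then real n powr (-\<gamma>) else 0))
            \<le> ennreal C} = {w\<in>space M. S w \<le> ennreal C}" by (simp add: S_def f_def)
  have meas: "{w\<in>space M. S w \<le> ennreal C} \<in> sets M" using Smeas by measurable
  have "measure M {w\<in>space M. S w \<le> ennreal C} = 0"
  proof -
    define k where "k n = k_seq \<beta> n" for n
    define p where "p n = real (k n) / (4 * real n)" for n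
    define g where "g n = real n powr (-\<gamma>)" for n
    have kb: "1 \<le> real (k n) \<and> real (k n) \<le> real n powr \<beta> \<and> real n powr \<beta> / 2 \<le> real (k n)" if n: "2 \<le> n" for n
    proof -
      have y1: "1 \<le> real n powr \<beta>" using n assms(5) by (intro ge_one_powr_ge_zero) auto
      have f1: "real_of_int \<lfloor>real n powr \<beta>\<rfloor> \<le> real n powr \<beta>" "real n powr \<beta> - 1 < real_of_int \<lfloor>real n powr \<beta>\<rfloor>"
        by linarith+
      have f2: "1 \<le> \<lfloor>real n powr \<beta>\<rfloor>" using y1 by (simp add: one_le_floor)
      have kk: "real (k n) = real_of_int \<lfloor>real n powr \<beta>\<rfloor>" unfolding k_def k_seq_def using f2 by simp
      show ?thesis unfolding kk using f1 f2 by linarith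
    qed
    have np: "real n powr \<beta> < real n" if "2 \<le> n" for n
    proof -
      have "real n powr \<beta> < real n powr 1" using that assms by (intro powr_less_mono) auto
      thus ?thesis using that by simp
    qed
    have p01: "0 < p n \<and> p n < 1" if n: "2 \<le> n" for n
      using kb[OF n] np[OF n] n unfolding p_def by (auto simp: field_simps)
    define t where "t n = (SOME t. p n \<le> P.prob {w\<in>space M. D 1 w \<le> t} \<and> P.prob {w\<in>space M. D 1 w < t} \<le> p n)" for n
    have tp: "p n \<le> P.prob {w\<in>space M. D 1 w \<le> t n} \<and> P.prob {w\<in>space M. D 1 w < t n} \<le> p n" if n: "2 \<le> n" for n
    proof -
      have ex: "\<exists>t. p n \<le> P.prob {w\<in>space M. D 1 w \<le> t} \<and> P.prob {w\<in>space M. D 1 w < t} \<le> p n"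
        using K.quantile[of "p n"] p01[OF n] Dnn by blast
      show ?thesis unfolding t_def by (rule someI_ex[OF ex])
    qed
    have g01: "0 \<le> g n" "g n \<le> 1" for n
    proof -
      show "0 \<le> g n" by (simp add: g_def)
      show "g n \<le> 1"
      proof (cases "n = 0")
        case False
        hence "real n powr (-\<gamma>) \<le> real n powr 0" using assms(7) by (intro powr_mono) auto
        thus ?thesis using False by (simp add: g_def)
      qed (simp add: g_def)
    qed
    have gp: "1 / (8 * real n) \<le> g n * p n" if n: "2 \<le> n" for n
    proof -
      have "1 \<le> real n powr (\<beta> - \<gamma>)" using n assms(9) by (intro ge_one_powr_ge_zero) auto
      hence "1 \<le> real n powr (-\<gamma>) * real n powr \<beta>" by (simp add: powr_add[symmetric])
      hence "1 / (8 * real n) \<le> real n powr (-\<gamma>) * (real n powr \<beta> / 2) / (4 * real n)"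
        using n by (simp add: field_simps)
      also have "\<dots> \<le> real n powr (-\<gamma>) * real (k n) / (4 * real n)"
        using kb[OF n] n by (intro divide_right_mono mult_left_mono) auto
      finally show ?thesis by (simp add: g_def p_def)
    qed
    define r where "r n = exp (- real (k_seq \<beta> n) / 2)" for n
    have rs: "summable r" unfolding r_def by (rule summable_exp_k[OF assms(5)])
    define Q where "Q n0 = {w\<in>space M. \<forall>N. (\<Sum>n\<in>{n0..N}. g n * indicator {..t n} (D n w)) \<le> C}" for n0
    have Q0: "P.prob (Q n0) = 0" if n0: "2 \<le> n0" for n0
      unfolding Q_def
    proof (rule K.weighted_BC)
      show "p n \<le> P.prob {w\<in>space M. D 1 w \<le> t n}" if "n0 \<le> n" for n using tp[of n] that n0 by auto
      show "\<exists>N. K \<le> (\<Sum>n\<in>{n0..N}. g n * p n)" for K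
      proof -
        obtain N where N: "8 * K \<le> (\<Sum>n\<in>{n0..N}. 1 / real n)" using harmonic_tail_unbounded by blast
        have "(\<Sum>n\<in>{n0..N}. 1 / real n) = 8 * (\<Sum>n\<in>{n0..N}. 1 / (8 * real n))"
          by (simp add: sum_distrib_left)
        also have "(\<Sum>n\<in>{n0..N}. 1 / (8 * real n)) \<le> (\<Sum>n\<in>{n0..N}. g n * p n)"
          using n0 by (intro sum_mono gp) auto
        finally have "K \<le> (\<Sum>n\<in>{n0..N}. g n * p n)" using N by linarith
        thus ?thesis by blast
      qed
    qed (use g01 n0 in auto)
    define Gc where "Gc n = {w\<in>space M. real (k n) \<le> (\<Sum>i\<in>{1..<n}. if D i w < t n then 1 else 0)}" for n
    have Gcm: "Gc n \<in> sets M" for n unfolding Gc_def using Dmeas by measurable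
    have Qm: "Q n \<in> sets M" for n unfolding Q_def using Dmeas by measurable
    have Gcb: "P.prob (Gc n) \<le> r n" if n: "2 \<le> n" for n
    proof -
      have "Gc n = {w\<in>space M. real (k n) \<le> real (card {i\<in>{1..<n}. D i w < t n})}"
        unfolding Gc_def card_eq by simp
      hence "P.prob (Gc n) \<le> exp (2 * real (n - 1) * P.prob {w\<in>space M. D 1 w < t n} - real (k n))"
        using K.count_tail by simp
      also have "\<dots> \<le> exp (- real (k n) / 2)"
      proof -
        have "2 * real (n - 1) * P.prob {w\<in>space M. D 1 w < t n} \<le> 2 * real n * p n"
          using tp[OF n] n p01[OF n] by (intro mult_mono) auto
        also have "\<dots> = real (k n) / 2" using n by (simp add: p_def field_simps)
        finally show ?thesis by simp
      qed
      finally show ?thesis by (simp add: r_def k_def)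
    qed
    have incl: "{w\<in>space M. S w \<le> ennreal C} \<subseteq> Q n0 \<union> (\<Union>j. Gc (j + n0))" if n0: "2 \<le> n0" for n0
    proof
      fix w assume w: "w \<in> {w\<in>space M. S w \<le> ennreal C}"
      show "w \<in> Q n0 \<union> (\<Union>j. Gc (j + n0))"
      proof (cases "\<exists>j. w \<in> Gc (j + n0)")
        case True thus ?thesis by blast
      next
        case False
        have G: "card {i\<in>{1..<n}. D i w < t n} < k n" if "n0 \<le> n" for n
        proof -
          have "w \<notin> Gc ((n - n0) + n0)" using False by blast
          hence "\<not> real (k n) \<le> real (card {i\<in>{1..<n}. D i w < t n})"
            using w that unfolding Gc_def card_eq by simp
          thus ?thesis by simp
        qed
        have "(\<Sum>n\<in>{n0..N}. g n * indicator {..t n} (D n w)) \<le> C" for N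
        proof -
          have "(\<Sum>n\<in>{n0..N}. g n * indicator {..t n} (D n w)) \<le> (\<Sum>n\<in>{n0..N}. f n w)"
          proof (rule sum_mono)
            fix n assume nn: "n \<in> {n0..N}"
            show "g n * indicator {..t n} (D n w) \<le> f n w"
            proof (cases "D n w \<le> t n")
              case True
              have "card {i\<in>{1..<n}. D i w < D n w} \<le> card {i\<in>{1..<n}. D i w < t n}"
                using True by (intro card_mono) auto
              hence "in_kNN X x \<beta> n w" using G[of n] nn n0 kNN_iff[of n w] by (auto simp: k_def)
              thus ?thesis using True nn n0 by (simp add: f_def g_def)
            qed (simp add: f0)
          qed
          also have "\<dots> \<le> (\<Sum>n\<in>{..<Suc N}. f n w)"
            by (intro sum_mono2) (auto simp: f0)
          finally have a: "(\<Sum>n\<in>{n0..N}. g n * indicator {..t n} (D n w)) \<le> (\<Sum>n\<in>{..<Suc N}. f n w)" .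
          have "ennreal (\<Sum>n\<in>{..<Suc N}. f n w) = (\<Sum>n\<in>{..<Suc N}. ennreal (f n w))"
            by (rule sum_ennreal[symmetric]) (rule f0)
          also have "\<dots> \<le> S w" unfolding S_def by (intro sum_le_suminf) auto
          also have "\<dots> \<le> ennreal C" using w by simp
          finally have "(\<Sum>n\<in>{..<Suc N}. f n w) \<le> C" using assms(10) by simp
          thus ?thesis using a by linarith
        qed
        hence "w \<in> Q n0" unfolding Q_def using w by auto
        thus ?thesis by blast
      qed
    qed
    have small: "P.prob {w\<in>space M. S w \<le> ennreal C} < e" if e: "0 < e" for e
    proof -
      obtain N where N: "\<forall>n\<ge>N. norm (\<Sum>i. r (i + n)) < e" using suminf_exist_split[OF e rs] by blast
      define n0 where "n0 = max N 2"
      have n0: "2 \<le> n0" "N \<le> n0" unfolding n0_def by auto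
      have rs0: "summable (\<lambda>j. r (j + n0))" using rs by (rule summable_ignore_initial_segment)
      have r0: "0 \<le> r n" for n by (simp add: r_def)
      have ps: "summable (\<lambda>j. P.prob (Gc (j + n0)))"
        by (rule summable_comparison_test'[OF rs0, where N=0]) (use Gcb n0 in auto)
      have "P.prob {w\<in>space M. S w \<le> ennreal C} \<le> P.prob (Q n0 \<union> (\<Union>j. Gc (j + n0)))"
        by (rule P.finite_measure_mono[OF incl[OF n0(1)]]) (use Qm Gcm in auto)
      also have "\<dots> \<le> P.prob (Q n0) + P.prob (\<Union>j. Gc (j + n0))"
        by (rule measure_Un_le) (use Qm Gcm in auto)
      also have "P.prob (\<Union>j. Gc (j + n0)) \<le> (\<Sum>j. P.prob (Gc (j + n0)))"
        by (rule P.finite_measure_subadditive_countably[OF _ ps]) (use Gcm in auto)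
      also have "\<dots> \<le> (\<Sum>j. r (j + n0))"
        by (rule suminf_le[OF _ ps rs0]) (use Gcb n0 in auto)
      also have "\<dots> < e" using N n0 r0 by (auto simp: suminf_nonneg[OF rs0])
      finally show ?thesis using Q0[OF n0(1)] by simp
    qed
    have "P.prob {w\<in>space M. S w \<le> ennreal C} \<le> 0"
    proof (rule ccontr)
      assume "\<not> ?thesis"
      hence "0 < P.prob {w\<in>space M. S w \<le> ennreal C}" by simp
      from small[OF this] show False by simp
    qed
    thus ?thesis using measure_nonneg[of M "{w\<in>space M. S w \<le> ennreal C}"] by linarith
  qed
  with meas show ?thesis unfolding set_eq by simp
qed


end
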